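(* Let $w>1$, $h_v(x)=\tanh(w\cdot x+v)$ and $g_v(x)=x-h_v(x)$ for $v\in\mathbb{R}$. Let $v_-,v_+$ be the unique reals such that $g_{v_-}$ vanishes at its local maximum point and $g_{v_+}$ vanishes at its local minimum point, and define the pivots $p_-=p_-^{v_-}$ and $p_+=p_+^{v_+}$. Then for every $v\in\mathbb{R}$, the function $h_v$ has one, two, or three fixpoints, all lying in $[-1,1]$, and: (1) if $h_v$ has exactly one fixpoint $x_1$, then $x_1\le p_-$ or $p_+\le x_1$; (2) if $h_v$ has exactly two fixpoints $x_1<x_3$, then $x_1\le p_-<p_+\le x_3$; (3) if $h_v$ has exactly three fixpoints $x_1<x_2<x_3$, then $x_1\le p_-<x_2<p_+\le x_3$.
   Context: For $w>1$, each $g_v$ has exactly two stationary points, the smaller one $p_-^v$ a local maximum and the larger one $p_+^v$ a local minimum; the values $v_-,v_+$ exist, are unique, and satisfy $v_+<v_-$. *)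

theory Defs
  imports Complex_Main
begin

definition h :: "real \<Rightarrow> real \<Rightarrow> real \<Rightarrow> real" where
  "h w v x = tanh (w * x + v)"

definition g :: "real \<Rightarrow> real \<Rightarrow> real \<Rightarrow> real" where
  "g w v x = x - h w v x"

definition loc_max_pt :: "(real \<Rightarrow> real) \<Rightarrow> real \<Rightarrow> bool" where
  "loc_max_pt f x \<longleftrightarrow> (\<exists>e>0. \<forall>y. dist y x < e \<longrightarrow> f y \<le> f x)"

definition loc_min_pt :: "(real \<Rightarrow> real) \<Rightarrow> real \<Rightarrow> bool" where
  "loc_min_pt f x \<longleftrightarrow> (\<exists>e>0. \<forall>y. dist y x < e \<longrightarrow> f x \<le> f y)"

definition p_minus_v :: "real \<Rightarrow> real \<Rightarrow> real" where
  "p_minus_v w v = (THE x. loc_max_pt (g w v) x)"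

definition p_plus_v :: "real \<Rightarrow> real \<Rightarrow> real" where
  "p_plus_v w v = (THE x. loc_min_pt (g w v) x)"

definition v_minus :: "real \<Rightarrow> real" where
  "v_minus w = (THE v. g w v (p_minus_v w v) = 0)"

definition v_plus :: "real \<Rightarrow> real" where
  "v_plus w = (THE v. g w v (p_plus_v w v) = 0)"

definition pivot_minus :: "real \<Rightarrow> real" where
  "pivot_minus w = p_minus_v w (v_minus w)"

definition pivot_plus :: "real \<Rightarrow> real" where
  "pivot_plus w = p_plus_v w (v_plus w)"

definition fixpoints :: "real \<Rightarrow> real \<Rightarrow> real set" where
  "fixpoints w v = {x. h w v x = x}"

end

theory Submission
  imports Defs
begin

definition cc :: "real \<Rightarrow> real" where "cc w = sqrt (1 - 1/w)"
definition aa :: "real \<Rightarrow> real" where "aa w = artanh (cc w)"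
definition P1 :: "real \<Rightarrow> real \<Rightarrow> real" where "P1 w v = (- aa w - v) / w"
definition P2 :: "real \<Rightarrow> real \<Rightarrow> real" where "P2 w v = (aa w - v) / w"

lemma tanh_artanh_real:
  assumes "-1 < (x::real)" "x < 1"
  shows "tanh (artanh x) = x"
proof -
  define y where "y = (1 + x) / (1 - x)"
  have y: "y > 0" using assms by (simp add: y_def)
  have "artanh x = ln (sqrt y)" using y by (simp add: artanh_def ln_sqrt y_def)
  hence "tanh (artanh x) = ((sqrt y)^2 - 1) / ((sqrt y)^2 + 1)"
    using y by (simp add: tanh_ln_real)
  also have "\<dots> = (y - 1) / (y + 1)" using y by simp
  also have "\<dots> = x" using assms unfolding y_def by (simp add: field_simps)
  finally show ?thesis .
qed

lemma cc_bounds: "w > 1 \<Longrightarrow> 0 < cc w \<and> cc w < 1"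
  unfolding cc_def by (auto simp: field_simps)

lemma cc_sq: "w > 1 \<Longrightarrow> (cc w)^2 = 1 - 1/w"
  unfolding cc_def by (simp add: field_simps)

lemma tanh_aa: "w > 1 \<Longrightarrow> tanh (aa w) = cc w"
  unfolding aa_def using cc_bounds[of w] by (intro tanh_artanh_real) auto

lemma aa_pos: "w > 1 \<Longrightarrow> aa w > 0"
  using tanh_aa[of w] cc_bounds[of w] tanh_real_pos_iff[of "aa w"] by simp

lemma g_deriv: "(g w v has_real_derivative (1 - w * (1 - tanh (w*x+v)^2))) (at x)"
  unfolding g_def[abs_def] h_def
  by (auto intro!: derivative_eq_intros simp: algebra_simps)

lemma g_cont: "continuous_on S (g w v)"
  using g_deriv by (metis DERIV_isCont continuous_at_imp_continuous_on)

lemma sign_pos: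
  assumes "w > 1" "\<bar>u\<bar> > aa w"
  shows "1 - w * (1 - tanh u ^ 2) > 0"
proof -
  have "tanh \<bar>u\<bar> > tanh (aa w)" by (simp only: tanh_real_less_iff) (rule assms(2))
  hence "\<bar>tanh u\<bar> > cc w" using tanh_aa[OF assms(1)] by simp
  hence "\<bar>tanh u\<bar>^2 > (cc w)^2" using cc_bounds[OF assms(1)]
    by (intro power_strict_mono) auto
  hence "tanh u ^2 > 1 - 1/w" using cc_sq[OF assms(1)] by simp
  hence "w * (1 - tanh u ^ 2) < w * (1/w)" using assms(1) by (intro mult_strict_left_mono) auto
  thus ?thesis using assms(1) by simp
qed

lemma sign_neg:
  assumes "w > 1" "\<bar>u\<bar> < aa w"
  shows "1 - w * (1 - tanh u ^ 2) < 0"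
proof -
  have "tanh \<bar>u\<bar> < tanh (aa w)" by (simp only: tanh_real_less_iff) (rule assms(2))
  hence "\<bar>tanh u\<bar> < cc w" using tanh_aa[OF assms(1)] by simp
  hence "\<bar>tanh u\<bar>^2 < (cc w)^2" using cc_bounds[OF assms(1)]
    by (intro power_strict_mono) auto
  hence "tanh u ^2 < 1 - 1/w" using cc_sq[OF assms(1)] by simp
  hence "w * (1 - tanh u ^ 2) > w * (1/w)" using assms(1) by (intro mult_strict_left_mono) auto
  thus ?thesis using assms(1) by simp
qed

lemma lt_P1: "w > 0 \<Longrightarrow> z < P1 w v \<longleftrightarrow> w*z+v < - aa w"
  unfolding P1_def by (simp add: field_simps)
lemma gt_P1: "w > 0 \<Longrightarrow> z > P1 w v \<longleftrightarrow> w*z+v > - aa w"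
  unfolding P1_def by (simp add: field_simps)
lemma lt_P2: "w > 0 \<Longrightarrow> z < P2 w v \<longleftrightarrow> w*z+v < aa w"
  unfolding P2_def by (simp add: field_simps)
lemma gt_P2: "w > 0 \<Longrightarrow> z > P2 w v \<longleftrightarrow> w*z+v > aa w"
  unfolding P2_def by (simp add: field_simps)
lemma P12: "w > 1 \<Longrightarrow> P1 w v < P2 w v"
  unfolding P1_def P2_def using aa_pos[of w] by (simp add: divide_strict_right_mono)

lemma inc1:
  assumes "w > 1" "x < y" "y \<le> P1 w v"
  shows "g w v x < g w v y"
proof (rule DERIV_pos_imp_increasing_open[OF assms(2) _ g_cont])
  fix z assume "x < z" "z < y"
  hence "w*z+v < - aa w" using assms lt_P1[where w=w and z=z and v=v] by auto
  hence "\<bar>w*z+v\<bar> > aa w" using aa_pos[OF assms(1)] by auto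
  thus "\<exists>l. DERIV (g w v) z :> l \<and> l > 0" using g_deriv sign_pos[OF assms(1)] by blast
qed

lemma inc2:
  assumes "w > 1" "x < y" "P2 w v \<le> x"
  shows "g w v x < g w v y"
proof (rule DERIV_pos_imp_increasing_open[OF assms(2) _ g_cont])
  fix z assume "x < z" "z < y"
  hence "w*z+v > aa w" using assms gt_P2[where w=w and z=z and v=v] by auto
  hence "\<bar>w*z+v\<bar> > aa w" using aa_pos[OF assms(1)] by auto
  thus "\<exists>l. DERIV (g w v) z :> l \<and> l > 0" using g_deriv sign_pos[OF assms(1)] by blast
qed

lemma dec:
  assumes "w > 1" "x < y" "P1 w v \<le> x" "y \<le> P2 w v"
  shows "g w v y < g w v x"
proof (rule DERIV_neg_imp_decreasing_open[OF assms(2) _ g_cont])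
  fix z assume "x < z" "z < y"
  hence "w*z+v > - aa w" "w*z+v < aa w" using assms gt_P1[where w=w and z=z and v=v] lt_P2[where w=w and z=z and v=v] by auto
  hence "\<bar>w*z+v\<bar> < aa w" by auto
  thus "\<exists>l. DERIV (g w v) z :> l \<and> l < 0" using g_deriv sign_neg[OF assms(1)] by blast
qed


lemma P2P1: "w > 1 \<Longrightarrow> P2 w v - P1 w v > 0" using P12[of w v] by simp

lemma w_P1: "w > 1 \<Longrightarrow> w * P1 w v + v = - aa w" unfolding P1_def by simp
lemma w_P2: "w > 1 \<Longrightarrow> w * P2 w v + v = aa w" unfolding P2_def by simp

lemma locmax_iff:
  assumes w: "w > 1"
  shows "loc_max_pt (g w v) x \<longleftrightarrow> x = P1 w v"
proof
  assume "x = P1 w v"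
  show "loc_max_pt (g w v) x" unfolding loc_max_pt_def
  proof (intro exI conjI allI impI)
    show "P2 w v - P1 w v > 0" using P2P1[OF w] .
    fix y assume "dist y x < P2 w v - P1 w v"
    hence y: "y < P2 w v" using \<open>x = P1 w v\<close> by (auto simp: dist_real_def)
    show "g w v y \<le> g w v x"
    proof (cases "y < x")
      case True thus ?thesis using inc1[where v=v, OF w True] \<open>x = P1 w v\<close> by auto
    next
      case False thus ?thesis using dec[OF w, of x y v] y \<open>x = P1 w v\<close>
        by (cases "x = y") auto
    qed
  qed
next
  assume "loc_max_pt (g w v) x"
  then obtain e where e: "e > 0" "\<forall>y. dist y x < e \<longrightarrow> g w v y \<le> g w v x"
    unfolding loc_max_pt_def by blast
  have "1 - w * (1 - tanh (w*x+v)^2) = 0"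
    by (rule DERIV_local_max[OF g_deriv e(1)]) (use e(2) in \<open>auto simp: dist_real_def abs_minus_commute\<close>)
  hence "\<bar>w*x+v\<bar> = aa w" using sign_pos[OF w] sign_neg[OF w]
    by (metis less_irrefl linorder_neqE_linordered_idom)
  moreover have "w*x+v \<noteq> aa w"
  proof
    assume "w*x+v = aa w"
    hence "x = P2 w v" unfolding P2_def using w by (simp add: field_simps)
    hence "g w v x < g w v (x + e/2)" using inc2[OF w, of x "x+e/2" v] e(1) by auto
    moreover have "g w v (x + e/2) \<le> g w v x" using e by (auto simp: dist_real_def)
    ultimately show False by simp
  qed
  ultimately have "w*x+v = - aa w" by auto
  thus "x = P1 w v" unfolding P1_def using w by (simp add: field_simps)
qed

lemma locmin_iff:
  assumes w: "w > 1"
  shows "loc_min_pt (g w v) x \<longleftrightarrow> x = P2 w v"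
proof
  assume "x = P2 w v"
  show "loc_min_pt (g w v) x" unfolding loc_min_pt_def
  proof (intro exI conjI allI impI)
    show "P2 w v - P1 w v > 0" using P2P1[OF w] .
    fix y assume "dist y x < P2 w v - P1 w v"
    hence y: "y > P1 w v" using \<open>x = P2 w v\<close> by (auto simp: dist_real_def)
    show "g w v x \<le> g w v y"
    proof (cases "x < y")
      case True thus ?thesis using inc2[where v=v, OF w True] \<open>x = P2 w v\<close> by auto
    next
      case False thus ?thesis using dec[OF w, of y x v] y \<open>x = P2 w v\<close>
        by (cases "x = y") auto
    qed
  qed
next
  assume "loc_min_pt (g w v) x"
  then obtain e where e: "e > 0" "\<forall>y. dist y x < e \<longrightarrow> g w v x \<le> g w v y"
    unfolding loc_min_pt_def by blast
  have "1 - w * (1 - tanh (w*x+v)^2) = 0"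
    by (rule DERIV_local_min[OF g_deriv e(1)]) (use e(2) in \<open>auto simp: dist_real_def abs_minus_commute\<close>)
  hence "\<bar>w*x+v\<bar> = aa w" using sign_pos[OF w] sign_neg[OF w]
    by (metis less_irrefl linorder_neqE_linordered_idom)
  moreover have "w*x+v \<noteq> - aa w"
  proof
    assume "w*x+v = - aa w"
    hence "x = P1 w v" unfolding P1_def using w by (simp add: field_simps)
    hence "g w v (x - e/2) < g w v x" using inc1[OF w, of "x-e/2" x v] e(1) by auto
    moreover have "g w v x \<le> g w v (x - e/2)" using e by (auto simp: dist_real_def)
    ultimately show False by simp
  qed
  ultimately have "w*x+v = aa w" by auto
  thus "x = P2 w v" unfolding P2_def using w by (simp add: field_simps)
qed

lemma pmv: "w > 1 \<Longrightarrow> p_minus_v w v = P1 w v"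
  unfolding p_minus_v_def using locmax_iff by (intro the_equality) auto
lemma ppv: "w > 1 \<Longrightarrow> p_plus_v w v = P2 w v"
  unfolding p_plus_v_def using locmin_iff by (intro the_equality) auto

lemma g_P1: "w > 1 \<Longrightarrow> g w v (P1 w v) = P1 w v + cc w"
  unfolding g_def h_def using w_P1[of w v] tanh_aa[of w] by simp
lemma g_P2: "w > 1 \<Longrightarrow> g w v (P2 w v) = P2 w v - cc w"
  unfolding g_def h_def using w_P2[of w v] tanh_aa[of w] by simp

lemma vminus: assumes w: "w > 1" shows "v_minus w = cc w * w - aa w"
  unfolding v_minus_def
proof (rule the_equality)
  show "g w (cc w * w - aa w) (p_minus_v w (cc w * w - aa w)) = 0"
  proof -
    have "P1 w (cc w * w - aa w) = - cc w" using w by (simp add: P1_def field_simps)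
    thus ?thesis unfolding pmv[OF w] g_P1[OF w] by simp
  qed
  fix v assume "g w v (p_minus_v w v) = 0"
  hence "P1 w v + cc w = 0" using w by (simp add: pmv g_P1)
  thus "v = cc w * w - aa w" unfolding P1_def using w by (simp add: field_simps)
qed

lemma vplus: assumes w: "w > 1" shows "v_plus w = aa w - cc w * w"
  unfolding v_plus_def
proof (rule the_equality)
  show "g w (aa w - cc w * w) (p_plus_v w (aa w - cc w * w)) = 0"
  proof -
    have "P2 w (aa w - cc w * w) = cc w" using w by (simp add: P2_def field_simps)
    thus ?thesis unfolding ppv[OF w] g_P2[OF w] by simp
  qed
  fix v assume "g w v (p_plus_v w v) = 0"
  hence "P2 w v - cc w = 0" using w by (simp add: ppv g_P2)
  thus "v = aa w - cc w * w" unfolding P2_def using w by (simp add: field_simps)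
qed

lemma pivm: "w > 1 \<Longrightarrow> pivot_minus w = - cc w"
  unfolding pivot_minus_def by (simp add: vminus pmv P1_def field_simps)
lemma pivp: "w > 1 \<Longrightarrow> pivot_plus w = cc w"
  unfolding pivot_plus_def by (simp add: vplus ppv P2_def field_simps)

lemma fix_iff: "x \<in> fixpoints w v \<longleftrightarrow> g w v x = 0"
  unfolding fixpoints_def g_def by auto

lemma fix_bounds: "g w v x = 0 \<Longrightarrow> -1 < x \<and> x < 1"
  unfolding g_def h_def using tanh_real_lt_1 tanh_real_gt_neg1 by (metis eq_iff_diff_eq_0)

lemma fix_L: assumes w: "w > 1" and z: "g w v x = 0"
  shows "x \<le> P1 w v \<longleftrightarrow> x \<le> - cc w"
proof -
  have x: "x = tanh (w*x+v)" using z unfolding g_def h_def by simp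
  have "x \<le> - cc w \<longleftrightarrow> tanh (w*x+v) \<le> tanh (- aa w)" using x tanh_aa[OF w] by simp
  also have "\<dots> \<longleftrightarrow> w*x+v \<le> - aa w" by (simp only: tanh_real_le_iff)
  also have "\<dots> \<longleftrightarrow> x \<le> P1 w v" unfolding P1_def using w by (simp add: field_simps)
  finally show ?thesis by simp
qed

lemma fix_R: assumes w: "w > 1" and z: "g w v x = 0"
  shows "P2 w v \<le> x \<longleftrightarrow> cc w \<le> x"
proof -
  have x: "x = tanh (w*x+v)" using z unfolding g_def h_def by simp
  have "cc w \<le> x \<longleftrightarrow> tanh (aa w) \<le> tanh (w*x+v)" using x tanh_aa[OF w] by simp
  also have "\<dots> \<longleftrightarrow> aa w \<le> w*x+v" by (simp only: tanh_real_le_iff)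
  also have "\<dots> \<longleftrightarrow> P2 w v \<le> x" unfolding P2_def using w by (simp add: field_simps)
  finally show ?thesis by simp
qed

lemma uniqL: "w > 1 \<Longrightarrow> g w v x = 0 \<Longrightarrow> g w v y = 0 \<Longrightarrow> x \<le> P1 w v \<Longrightarrow> y \<le> P1 w v \<Longrightarrow> x = y"
  using inc1[of w x y v] inc1[of w y x v] by (cases x y rule: linorder_cases) auto
lemma uniqR: "w > 1 \<Longrightarrow> g w v x = 0 \<Longrightarrow> g w v y = 0 \<Longrightarrow> P2 w v \<le> x \<Longrightarrow> P2 w v \<le> y \<Longrightarrow> x = y"
  using inc2[of w x y v] inc2[of w y x v] by (cases x y rule: linorder_cases) auto
lemma uniqM: "w > 1 \<Longrightarrow> g w v x = 0 \<Longrightarrow> g w v y = 0 \<Longrightarrow> P1 w v < x \<Longrightarrow> x < P2 w v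
   \<Longrightarrow> P1 w v < y \<Longrightarrow> y < P2 w v \<Longrightarrow> x = y"
  using dec[of w x y v] dec[of w y x v] by (cases x y rule: linorder_cases) auto

lemma g_lt: "g w v y < y + 1" unfolding g_def h_def using tanh_real_gt_neg1 by smt
lemma g_gt: "g w v y > y - 1" unfolding g_def h_def using tanh_real_lt_1 by smt

lemma existsL:
  assumes w: "w > 1" and "g w v x = 0" "P1 w v < x" "x < P2 w v"
  shows "\<exists>z. g w v z = 0 \<and> z \<le> P1 w v"
proof -
  have "g w v (P1 w v) > 0" using dec[OF w, of "P1 w v" x v] assms by auto
  hence le: "-1 \<le> P1 w v" using g_lt[where w=w and v=v and y="P1 w v"] by auto
  have "g w v (-1) \<le> 0" using g_lt[where w=w and v=v and y="-1"] by auto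
  from IVT'[OF this _ le g_cont] \<open>g w v (P1 w v) > 0\<close> show ?thesis by auto
qed

lemma existsR:
  assumes w: "w > 1" and "g w v x = 0" "P1 w v < x" "x < P2 w v"
  shows "\<exists>z. g w v z = 0 \<and> P2 w v \<le> z"
proof -
  have "g w v (P2 w v) < 0" using dec[OF w, of x "P2 w v" v] assms by auto
  hence le: "P2 w v \<le> 1" using g_gt[where w=w and v=v and y="P2 w v"] by auto
  have "g w v 1 \<ge> 0" using g_gt[where w=w and v=v and y=1] by auto
  from IVT'[OF _ this le g_cont] \<open>g w v (P2 w v) < 0\<close> show ?thesis by auto
qed

lemma exists0: "\<exists>z. g w v z = 0"
proof -
  have "g w v (-1) \<le> 0" "g w v 1 \<ge> 0" using g_lt[where w=w and v=v and y="-1"] g_gt[where w=w and v=v and y=1] by auto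
  from IVT'[OF this _ g_cont] show ?thesis by auto
qed

lemma subsing: "(\<forall>x\<in>S. \<forall>y\<in>S. x = y) \<Longrightarrow> finite S \<and> card S \<le> 1"
proof -
  assume a: "\<forall>x\<in>S. \<forall>y\<in>S. x = y"
  hence "S = {} \<or> (\<exists>x. S = {x})" by blast
  thus ?thesis by auto
qed

theorem proposition10:
  fixes w v :: real
  assumes "w > 1"
  shows "finite (fixpoints w v)
    \<and> card (fixpoints w v) \<in> {1, 2, 3}
    \<and> fixpoints w v \<subseteq> {-1..1}
    \<and> (\<forall>x1. fixpoints w v = {x1} \<longrightarrow> x1 \<le> pivot_minus w \<or> pivot_plus w \<le> x1)
    \<and> (\<forall>x1 x3. fixpoints w v = {x1, x3} \<and> x1 < x3 \<longrightarrow>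
          x1 \<le> pivot_minus w \<and> pivot_minus w < pivot_plus w \<and> pivot_plus w \<le> x3)
    \<and> (\<forall>x1 x2 x3. fixpoints w v = {x1, x2, x3} \<and> x1 < x2 \<and> x2 < x3 \<longrightarrow>
          x1 \<le> pivot_minus w \<and> pivot_minus w < x2 \<and> x2 < pivot_plus w \<and> pivot_plus w \<le> x3)"
proof -
  note w = assms
  define F where "F = fixpoints w v"
  define A where "A = F \<inter> {x. x \<le> P1 w v}"
  define B where "B = F \<inter> {x. P1 w v < x \<and> x < P2 w v}"
  define C where "C = F \<inter> {x. P2 w v \<le> x}"
  have FU: "F = A \<union> B \<union> C" unfolding A_def B_def C_def by auto
  have A: "finite A \<and> card A \<le> 1" unfolding A_def F_def
    by (rule subsing) (use uniqL[OF w] in \<open>auto simp: fix_iff\<close>)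
  have B: "finite B \<and> card B \<le> 1" unfolding B_def F_def
    by (rule subsing) (use uniqM[OF w] in \<open>auto simp: fix_iff\<close>)
  have C: "finite C \<and> card C \<le> 1" unfolding C_def F_def
    by (rule subsing) (use uniqR[OF w] in \<open>auto simp: fix_iff\<close>)
  have fin: "finite F" using A B C FU by auto
  have "card F \<le> card A + card B + card C" unfolding FU
    by (metis card_Un_le add_le_mono le_trans order_refl)
  hence c3: "card F \<le> 3" using A B C by linarith
  have "F \<noteq> {}" using exists0[of w v] unfolding F_def by (auto simp: fix_iff)
  hence c1: "card F \<ge> 1" using fin by (simp add: Suc_le_eq card_gt_0_iff)
  have card: "card F \<in> {1,2,3}" using c1 c3 by auto
  have sub: "F \<subseteq> {-1..1}" unfolding F_def using fix_bounds by (auto simp: fix_iff less_imp_le)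
  have cpos: "- cc w < cc w" using cc_bounds[OF w] by auto
  have p12: "P1 w v < P2 w v" using P12[OF w] .
  have case1: "x1 \<le> - cc w \<or> cc w \<le> x1" if "F = {x1}" for x1
  proof -
    have z: "g w v x1 = 0" using that unfolding F_def by (auto simp: fix_iff)
    have "\<not> (P1 w v < x1 \<and> x1 < P2 w v)"
    proof
      assume m: "P1 w v < x1 \<and> x1 < P2 w v"
      then obtain z where "g w v z = 0" "z \<le> P1 w v" using existsL[OF w z] by auto
      hence "z \<in> F" unfolding F_def by (simp add: fix_iff)
      thus False using that m \<open>z \<le> P1 w v\<close> by auto
    qed
    thus ?thesis using fix_L[OF w z] fix_R[OF w z] by linarith
  qed
  have case2: "x1 \<le> - cc w \<and> cc w \<le> x3" if "F = {x1, x3}" "x1 < x3" for x1 x3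
  proof -
    have z1: "g w v x1 = 0" and z3: "g w v x3 = 0" using that unfolding F_def by (auto simp: fix_iff)
    have n1: "\<not> (P1 w v < x1 \<and> x1 < P2 w v)"
    proof
      assume m: "P1 w v < x1 \<and> x1 < P2 w v"
      then obtain z where "g w v z = 0" "z \<le> P1 w v" using existsL[OF w z1] by auto
      hence "z \<in> F" unfolding F_def by (simp add: fix_iff)
      thus False using that m \<open>z \<le> P1 w v\<close> by auto
    qed
    have n3: "\<not> (P1 w v < x3 \<and> x3 < P2 w v)"
    proof
      assume m: "P1 w v < x3 \<and> x3 < P2 w v"
      then obtain z where "g w v z = 0" "P2 w v \<le> z" using existsR[OF w z3] by auto
      hence "z \<in> F" unfolding F_def by (simp add: fix_iff)
      thus False using that m \<open>P2 w v \<le> z\<close> by auto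
    qed
    have "\<not> (x1 \<le> P1 w v \<and> x3 \<le> P1 w v)" using uniqL[OF w z1 z3] that by auto
    moreover have "\<not> (P2 w v \<le> x1 \<and> P2 w v \<le> x3)" using uniqR[OF w z1 z3] that by auto
    ultimately have "x1 \<le> P1 w v \<and> P2 w v \<le> x3" using n1 n3 p12 that(2) by linarith
    thus ?thesis using fix_L[OF w z1] fix_R[OF w z3] by auto
  qed
  have case3: "x1 \<le> - cc w \<and> - cc w < x2 \<and> x2 < cc w \<and> cc w \<le> x3"
    if "F = {x1, x2, x3}" "x1 < x2" "x2 < x3" for x1 x2 x3
  proof -
    have z1: "g w v x1 = 0" and z2: "g w v x2 = 0" and z3: "g w v x3 = 0"
      using that unfolding F_def by (auto simp: fix_iff)
    have u12: "\<not> (x1 \<le> P1 w v \<and> x2 \<le> P1 w v)" using uniqL[OF w z1 z2] that by auto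
    have u23: "\<not> (P2 w v \<le> x2 \<and> P2 w v \<le> x3)" using uniqR[OF w z2 z3] that by auto
    have m12: "\<not> (P1 w v < x1 \<and> x1 < P2 w v \<and> P1 w v < x2 \<and> x2 < P2 w v)"
      using uniqM[OF w z1 z2] that by auto
    have m23: "\<not> (P1 w v < x3 \<and> x3 < P2 w v \<and> P1 w v < x2 \<and> x2 < P2 w v)"
      using uniqM[OF w z3 z2] that by auto
    have "x1 \<le> P1 w v \<and> P1 w v < x2 \<and> x2 < P2 w v \<and> P2 w v \<le> x3"
      using u12 u23 m12 m23 that(2,3) by linarith
    moreover have "x2 \<le> P1 w v \<longleftrightarrow> x2 \<le> - cc w" "P2 w v \<le> x2 \<longleftrightarrow> cc w \<le> x2"
      using fix_L[OF w z2] fix_R[OF w z2] by auto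
    ultimately show ?thesis using fix_L[OF w z1] fix_R[OF w z3] by linarith
  qed
  have c1': "\<forall>x1. F = {x1} \<longrightarrow> x1 \<le> - cc w \<or> cc w \<le> x1" using case1 by blast
  have c2': "\<forall>x1 x3. F = {x1, x3} \<and> x1 < x3 \<longrightarrow> x1 \<le> - cc w \<and> - cc w < cc w \<and> cc w \<le> x3"
    using case2 cpos by blast
  have c3': "\<forall>x1 x2 x3. F = {x1, x2, x3} \<and> x1 < x2 \<and> x2 < x3 \<longrightarrow>
          x1 \<le> - cc w \<and> - cc w < x2 \<and> x2 < cc w \<and> cc w \<le> x3"
    using case3 by blast
  show ?thesis unfolding F_def[symmetric] pivm[OF w] pivp[OF w]
    by (rule conjI[OF fin conjI[OF card conjI[OF sub conjI[OF c1' conjI[OF c2' c3']]]]])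
qed

end
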